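(* Let $0<b<1$ be fixed, let $\beta=1-b$, and let $t,k$ be constants with $t>\frac{1+\log 2}{\beta}-\log\beta$ and $k>\frac{2t}{1-e^{-t}}$. If $p=p(n)$ satisfies $np\ge k\log n$, then the random graph $G=\mathcal G(n,p)$ asymptotically almost surely has $\iota_v(G)\ge b$.
   Context: $\mathcal G(n,p)$ is the Erdős–Rényi random graph on $n$ labelled vertices with each edge present independently with probability $p$. "Asymptotically almost surely" means with probability tending to $1$ as $n\to\infty$. $\log$ is the natural logarithm. For a graph $G$ on $n$ vertices, $N(S)$ is the set of vertices with a neighbour in $S$ and $\iota_v(G)=\min_{0<|S|\le n/2}|N(S)\setminus S|/|S|$. *)

theory Defs
  imports Complex_Main
begin

text \<open>Graphs on the labelled vertex set {0..<n} are represented by their edge sets: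
  sets of 2-element subsets {u,v} (u \<noteq> v) of {0..<n}.\<close>

definition all_edges :: "nat \<Rightarrow> nat set set" where
  "all_edges n = {e. \<exists>u v. u < n \<and> v < n \<and> u \<noteq> v \<and> e = {u, v}}"

text \<open>Probability that G(n,p) has property P: each of the possible edges is present
  independently with probability p.\<close>

definition gnp_prob :: "nat \<Rightarrow> real \<Rightarrow> (nat set set \<Rightarrow> bool) \<Rightarrow> real" where
  "gnp_prob n p P =
     (\<Sum>E \<in> {E. E \<subseteq> all_edges n \<and> P E}.
        p ^ card E * (1 - p) ^ (card (all_edges n) - card E))"

definition nbhd :: "nat set set \<Rightarrow> nat set \<Rightarrow> nat set" where
  "nbhd E S = {v. \<exists>u \<in> S. {u, v} \<in> E}"

definition iota_v :: "nat \<Rightarrow> nat set set \<Rightarrow> real" where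
  "iota_v n E = Min {real (card (nbhd E S - S)) / real (card S) | S.
                       S \<subseteq> {..<n} \<and> 0 < card S \<and> real (card S) \<le> real n / 2}"

end

theory Submission
  imports Defs "HOL-Real_Asymp.Real_Asymp"
begin

lemma finite_all_edges: "finite (all_edges n)"
proof -
  have "all_edges n \<subseteq> Pow {..<n}" unfolding all_edges_def by auto
  thus ?thesis by (rule finite_subset) auto
qed

lemma prod_if_const:
  fixes c :: real
  assumes "finite A" "F \<subseteq> A"
  shows "(\<Prod>i\<in>A. if i \<in> F then c else 1) = c ^ card F"
proof -
  have "(\<Prod>i\<in>A. if i \<in> F then c else 1) = (\<Prod>i\<in>{x\<in>A. x \<in> F}. c)"
    using assms(1) by (rule prod.inter_filter[symmetric])
  also have "{x\<in>A. x \<in> F} = F" using assms(2) by auto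
  finally show ?thesis by simp
qed

lemma gnp_avoid:
  assumes F: "F \<subseteq> all_edges n"
  shows "gnp_prob n p (\<lambda>E. E \<inter> F = {}) = (1 - p) ^ card F"
proof -
  let ?A = "all_edges n"
  have fA: "finite ?A" by (rule finite_all_edges)
  define f where "f i = (if i \<in> F then 0 else p)" for i :: "nat set"
  have "(\<Prod>i\<in>?A. f i + (1 - p)) = (\<Sum>X\<in>Pow ?A. (\<Prod>x\<in>X. f x) * (\<Prod>x\<in>?A-X. 1 - p))"
    by (rule prod_add[OF fA])
  moreover have "(\<Prod>i\<in>?A. f i + (1 - p)) = (1 - p) ^ card F"
  proof -
    have "(\<Prod>i\<in>?A. f i + (1 - p)) = (\<Prod>i\<in>?A. if i \<in> F then 1 - p else 1)"
      by (rule prod.cong) (auto simp: f_def)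
    thus ?thesis using prod_if_const[OF fA F] by simp
  qed
  moreover have "(\<Sum>X\<in>Pow ?A. (\<Prod>x\<in>X. f x) * (\<Prod>x\<in>?A-X. 1 - p))
      = (\<Sum>X\<in>Pow ?A. if X \<inter> F = {} then p ^ card X * (1 - p) ^ (card ?A - card X) else 0)"
  proof (rule sum.cong)
    fix X assume X: "X \<in> Pow ?A"
    hence fX: "finite X" using fA finite_subset by blast
    have c: "card (?A - X) = card ?A - card X" using X fX by (simp add: card_Diff_subset)
    show "(\<Prod>x\<in>X. f x) * (\<Prod>x\<in>?A-X. 1 - p) = (if X \<inter> F = {} then p ^ card X * (1 - p) ^ (card ?A - card X) else 0)"
    proof (cases "X \<inter> F = {}")
      case True
      hence "(\<Prod>x\<in>X. f x) = (\<Prod>x\<in>X. p)"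
        by (intro prod.cong) (auto simp: f_def)
      hence "(\<Prod>x\<in>X. f x) = p ^ card X" by simp
      thus ?thesis using True c by simp
    next
      case False
      then obtain x where "x \<in> X" "x \<in> F" by blast
      hence "(\<Prod>x\<in>X. f x) = 0" using fX by (simp add: prod_zero_iff f_def) blast
      thus ?thesis using False by simp
    qed
  qed simp
  moreover have "(\<Sum>X\<in>Pow ?A. if X \<inter> F = {} then p ^ card X * (1 - p) ^ (card ?A - card X) else 0)
     = gnp_prob n p (\<lambda>E. E \<inter> F = {})"
  proof -
    have e: "{E. E \<subseteq> ?A \<and> E \<inter> F = {}} = {X \<in> Pow ?A. X \<inter> F = {}}" by auto
    have "gnp_prob n p (\<lambda>E. E \<inter> F = {}) = (\<Sum>X\<in>{X \<in> Pow ?A. X \<inter> F = {}}. p ^ card X * (1 - p) ^ (card ?A - card X))"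
      unfolding gnp_prob_def e ..
    also have "\<dots> = (\<Sum>X\<in>Pow ?A. if X \<inter> F = {} then p ^ card X * (1 - p) ^ (card ?A - card X) else 0)"
      by (rule sum.inter_filter) (simp add: fA)
    finally show ?thesis by simp
  qed
  ultimately show ?thesis by simp
qed

lemma gnp_total: "gnp_prob n p (\<lambda>E. True) = 1"
  using gnp_avoid[of "{}" n p] by (simp add: gnp_prob_def)

lemma gnp_compl: "gnp_prob n p P = 1 - gnp_prob n p (\<lambda>E. \<not> P E)"
proof -
  let ?A = "all_edges n"
  let ?w = "\<lambda>E. p ^ card E * (1 - p) ^ (card ?A - card E)"
  have fin: "finite {E. E \<subseteq> ?A}" using finite_all_edges by simp
  have f1: "finite {E. E \<subseteq> ?A \<and> P E}" by (rule finite_subset[OF _ fin]) auto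
  have f2: "finite {E. E \<subseteq> ?A \<and> \<not> P E}" by (rule finite_subset[OF _ fin]) auto
  have d: "{E. E \<subseteq> ?A \<and> P E} \<inter> {E. E \<subseteq> ?A \<and> \<not> P E} = {}" by auto
  have u: "{E. E \<subseteq> ?A \<and> True} = {E. E \<subseteq> ?A \<and> P E} \<union> {E. E \<subseteq> ?A \<and> \<not> P E}" by auto
  have "sum ?w ({E. E \<subseteq> ?A \<and> P E} \<union> {E. E \<subseteq> ?A \<and> \<not> P E})
      = sum ?w {E. E \<subseteq> ?A \<and> P E} + sum ?w {E. E \<subseteq> ?A \<and> \<not> P E}"
    by (rule sum.union_disjoint[OF f1 f2 d])
  hence "gnp_prob n p (\<lambda>E. True) = gnp_prob n p P + gnp_prob n p (\<lambda>E. \<not> P E)"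
    unfolding gnp_prob_def u .
  thus ?thesis using gnp_total[of n p] by simp
qed

lemma gnp_nonneg: "0 \<le> p \<Longrightarrow> p \<le> 1 \<Longrightarrow> 0 \<le> gnp_prob n p P"
  unfolding gnp_prob_def by (intro sum_nonneg) simp

lemma gnp_mono:
  assumes "0 \<le> p" "p \<le> 1" "\<And>E. E \<subseteq> all_edges n \<Longrightarrow> P E \<Longrightarrow> Q E"
  shows "gnp_prob n p P \<le> gnp_prob n p Q"
  unfolding gnp_prob_def
proof (rule sum_mono2)
  show "finite {E. E \<subseteq> all_edges n \<and> Q E}"
    by (rule finite_subset[of _ "Pow (all_edges n)"]) (auto simp: finite_all_edges)
qed (use assms in auto)

lemma gnp_or:
  assumes "0 \<le> p" "p \<le> 1"
  shows "gnp_prob n p (\<lambda>E. P E \<or> Q E) \<le> gnp_prob n p P + gnp_prob n p Q"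
proof -
  let ?A = "all_edges n"
  let ?w = "\<lambda>E. p ^ card E * (1 - p) ^ (card ?A - card E)"
  have fin: "finite {E. E \<subseteq> ?A}" using finite_all_edges by simp
  have fP: "finite {E. E \<subseteq> ?A \<and> P E}" "finite {E. E \<subseteq> ?A \<and> Q E}"
    by (auto intro: finite_subset[OF _ fin])
  have eq: "{E. E \<subseteq> ?A \<and> (P E \<or> Q E)} = {E. E \<subseteq> ?A \<and> P E} \<union> {E. E \<subseteq> ?A \<and> Q E}" by auto
  have "sum ?w ({E. E \<subseteq> ?A \<and> P E} \<union> {E. E \<subseteq> ?A \<and> Q E}) =
     sum ?w {E. E \<subseteq> ?A \<and> P E} + sum ?w {E. E \<subseteq> ?A \<and> Q E} - sum ?w ({E. E \<subseteq> ?A \<and> P E} \<inter> {E. E \<subseteq> ?A \<and> Q E})"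
    by (rule sum_Un[OF fP])
  moreover have "0 \<le> sum ?w ({E. E \<subseteq> ?A \<and> P E} \<inter> {E. E \<subseteq> ?A \<and> Q E})"
    using assms by (intro sum_nonneg) simp
  ultimately show ?thesis unfolding gnp_prob_def eq by linarith
qed

lemma gnp_union:
  assumes "0 \<le> p" "p \<le> 1" "finite I"
  shows "gnp_prob n p (\<lambda>E. \<exists>i\<in>I. Q i E) \<le> (\<Sum>i\<in>I. gnp_prob n p (Q i))"
  using assms(3)
proof (induction I rule: finite_induct)
  case empty
  have "gnp_prob n p (\<lambda>E. \<exists>i\<in>{}. Q i E) = 0" by (simp add: gnp_prob_def)
  thus ?case by simp
next
  case (insert x I)
  have "gnp_prob n p (\<lambda>E. \<exists>i\<in>insert x I. Q i E) = gnp_prob n p (\<lambda>E. Q x E \<or> (\<exists>i\<in>I. Q i E))"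
    by simp
  also have "\<dots> \<le> gnp_prob n p (Q x) + gnp_prob n p (\<lambda>E. \<exists>i\<in>I. Q i E)"
    by (rule gnp_or[OF assms(1,2)])
  also have "\<dots> \<le> gnp_prob n p (Q x) + (\<Sum>i\<in>I. gnp_prob n p (Q i))"
    using insert by simp
  finally show ?case using insert by simp
qed

lemma term_bound:
  fixes n s u :: nat and p k b :: real
  assumes n2: "2 \<le> n" and p0: "0 \<le> p" and pn: "k * ln n \<le> n * p" and k2: "2 < k"
    and b: "0 < b" "b < 1" and s1: "1 \<le> s" and s2: "2 * s \<le> n" and us: "u \<le> s"
  fixes Ln e a c :: real
  defines "Ln \<equiv> ln (real n)" and "e \<equiv> (k - 2) / (4 * k)" and "a \<equiv> (k + 2) / 4"
    and "c \<equiv> k * e * (1 - b) / 2"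
  shows "exp (- p * s * (real n - real s - b * s)) \<le>
    exp (- a * Ln) ^ s * exp (- a * Ln) ^ u + exp (- c * n * Ln)"
proof -
  have L0: "0 < Ln" unfolding Ln_def using n2 by simp
  have e0: "0 < e" "e < 1/2" unfolding e_def using k2 by (auto simp: field_simps)
  have ke: "k * (1 - 2 * e) = 2 * a" unfolding e_def a_def using k2 by (simp add: field_simps)
  have bs: "b * s \<le> s" using b by (simp add: mult_left_le_one_le)
  have ps0: "0 \<le> p * s" using p0 by simp
  have rhs0: "0 \<le> exp (- a * Ln) ^ s * exp (- a * Ln) ^ u" by simp
  show ?thesis
  proof (cases "real s \<le> e * n")
    case True
    have "real n - real s - b * s \<ge> n - 2 * (e * n)" using True bs by linarith
    also have "n - 2 * (e * n) = n * (1 - 2 * e)" by (simp add: algebra_simps)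
    finally have h1: "real n - real s - b * s \<ge> n * (1 - 2 * e)" .
    have "p * s * (real n - real s - b * s) \<ge> p * s * (n * (1 - 2 * e))"
      using h1 ps0 by (rule mult_left_mono)
    also have "p * s * (n * (1 - 2 * e)) = (n * p) * (s * (1 - 2 * e))" by (simp add: algebra_simps)
    also have "(n * p) * (s * (1 - 2 * e)) \<ge> (k * Ln) * (s * (1 - 2 * e))"
      using pn e0 unfolding Ln_def by (intro mult_right_mono) auto
    also have "(k * Ln) * (s * (1 - 2 * e)) = Ln * s * (k * (1 - 2 * e))" by (simp add: algebra_simps)
    also have "\<dots> = 2 * a * Ln * s" unfolding ke by (simp add: algebra_simps)
    finally have h2: "p * s * (real n - real s - b * s) \<ge> 2 * a * Ln * s" by simp
    have aL: "0 \<le> a * Ln" using L0 k2 unfolding a_def by simp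
    have "a * Ln * (s + u) \<le> a * Ln * (2 * s)"
      using us aL by (intro mult_left_mono) auto
    hence "a * Ln * (s + u) \<le> 2 * a * Ln * s" by (simp add: algebra_simps)
    hence "p * s * (real n - real s - b * s) \<ge> a * Ln * (s + u)" using h2 by linarith
    hence "exp (- p * s * (real n - real s - b * s)) \<le> exp (- a * Ln * (s + u))" by simp
    also have "exp (- a * Ln * (s + u)) = exp (real s * (- a * Ln)) * exp (real u * (- a * Ln))"
      by (simp add: exp_add[symmetric] algebra_simps)
    also have "\<dots> = exp (- a * Ln) ^ s * exp (- a * Ln) ^ u"
      by (simp only: exp_of_nat_mult)
    finally show ?thesis by (simp add: add_increasing2)
  next
    case False
    have h1: "real n - real s - b * s \<ge> (1 - b) * n / 2"
    proof -
      have "(1 + b) * s \<le> (1 + b) * (n / 2)" using s2 b by (intro mult_left_mono) auto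
      hence "s + b * s \<le> n / 2 + b * (n / 2)" by (simp add: algebra_simps)
      moreover have "(1 - b) * n / 2 = n / 2 - b * (n / 2)" by (simp add: field_simps)
      ultimately show ?thesis by linarith
    qed
    have h3: "p * s \<ge> p * (e * n)" using False p0 by (intro mult_left_mono) auto
    have "p * s * (real n - real s - b * s) \<ge> p * (e * n) * ((1 - b) * n / 2)"
      using h1 h3 b p0 e0 ps0 False by (intro mult_mono) auto
    also have "p * (e * n) * ((1 - b) * n / 2) = (n * p) * (e * (1 - b) * n / 2)" by (simp add: algebra_simps)
    also have "(n * p) * (e * (1 - b) * n / 2) \<ge> (k * Ln) * (e * (1 - b) * n / 2)"
      using pn e0 b unfolding Ln_def by (intro mult_right_mono) auto
    also have "(k * Ln) * (e * (1 - b) * n / 2) = c * n * Ln" unfolding c_def by (simp add: algebra_simps)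
    finally have "exp (- p * s * (real n - real s - b * s)) \<le> exp (- c * n * Ln)" by simp
    thus ?thesis using rhs0 by linarith
  qed
qed

lemma limB:
  fixes a c :: real
  assumes "a > 1" "c > 0"
  shows "(\<lambda>n::nat. (exp (real n * exp (-a * ln (real n))) - 1) * exp (real n * exp (-a * ln (real n)))
     + 2^n * 2^n * exp (- c * real n * ln (real n))) \<longlonglongrightarrow> 0"
proof -
  have "(\<lambda>n::nat. (exp (real n * exp (-a * ln (real n))) - 1) * exp (real n * exp (-a * ln (real n)))) \<longlonglongrightarrow> 0"
    using assms by real_asymp
  moreover have "(\<lambda>n::nat. 2^n * 2^n * exp (- c * real n * ln (real n)) :: real) \<longlonglongrightarrow> 0"
    using assms by real_asymp
  ultimately show ?thesis using tendsto_add by fastforce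
qed

definition Iset :: "real \<Rightarrow> nat \<Rightarrow> (nat set \<times> nat set) set" where
  "Iset b n = {(S, U). S \<subseteq> {..<n} \<and> 0 < card S \<and> real (card S) \<le> real n / 2 \<and>
                 U \<subseteq> {..<n} \<and> real (card U) < b * real (card S)}"

definition Fset :: "nat \<Rightarrow> nat set \<Rightarrow> nat set \<Rightarrow> nat set set" where
  "Fset n S U = (\<lambda>(u, v). {u, v}) ` (S \<times> ({..<n} - S - U))"

lemma Iset_sub: "Iset b n \<subseteq> (Pow {..<n} - {{}}) \<times> Pow {..<n}"
  unfolding Iset_def by auto

lemma finite_Iset: "finite (Iset b n)"
  by (rule finite_subset[OF Iset_sub]) auto

lemma Fset_sub: "S \<subseteq> {..<n} \<Longrightarrow> Fset n S U \<subseteq> all_edges n"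
  unfolding Fset_def all_edges_def by auto

lemma card_Fset:
  assumes "finite S"
  shows "card (Fset n S U) = card S * card ({..<n} - S - U)"
proof -
  have "inj_on (\<lambda>(u, v). {u, v}) (S \<times> ({..<n} - S - U))"
    by (auto simp: inj_on_def doubleton_eq_iff)
  hence "card (Fset n S U) = card (S \<times> ({..<n} - S - U))"
    unfolding Fset_def by (rule card_image)
  thus ?thesis by (simp add: card_cartesian_product)
qed

lemma bad_cover:
  assumes n2: "2 \<le> n" and E: "E \<subseteq> all_edges n" and bad: "\<not> b \<le> iota_v n E"
  shows "\<exists>i\<in>Iset b n. E \<inter> Fset n (fst i) (snd i) = {}"
proof -
  let ?C = "{S. S \<subseteq> {..<n} \<and> 0 < card S \<and> real (card S) \<le> real n / 2}"
  let ?X = "{real (card (nbhd E S - S)) / real (card S) | S.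
                       S \<subseteq> {..<n} \<and> 0 < card S \<and> real (card S) \<le> real n / 2}"
  have X: "?X = (\<lambda>S. real (card (nbhd E S - S)) / real (card S)) ` ?C" by auto
  have "finite ?C" by (rule finite_subset[of _ "Pow {..<n}"]) auto
  hence fX: "finite ?X" unfolding X by simp
  have "{0} \<in> ?C" using n2 by auto
  hence neX: "?X \<noteq> {}" unfolding X by blast
  have "Min ?X \<in> ?X" using fX neX by (rule Min_in)
  then obtain S where S: "S \<subseteq> {..<n}" "0 < card S" "real (card S) \<le> real n / 2"
    and eq: "Min ?X = real (card (nbhd E S - S)) / real (card S)" by auto
  have "real (card (nbhd E S - S)) / real (card S) < b"
    using bad eq unfolding iota_v_def by simp
  hence lt: "real (card (nbhd E S - S)) < b * real (card S)"
    using S(2) by (simp add: divide_less_eq)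
  define U where "U = nbhd E S - S"
  have U: "U \<subseteq> {..<n}"
  proof
    fix v assume "v \<in> U"
    then obtain u where "u \<in> S" "{u, v} \<in> E" unfolding U_def nbhd_def by auto
    hence "{u, v} \<in> all_edges n" using E by auto
    then obtain x y where "x < n" "y < n" "{u, v} = {x, y}" unfolding all_edges_def by auto
    thus "v \<in> {..<n}" by (auto simp: doubleton_eq_iff)
  qed
  have "(S, U) \<in> Iset b n" using S U lt unfolding Iset_def U_def by auto
  moreover have "E \<inter> Fset n S U = {}"
  proof (rule ccontr)
    assume "E \<inter> Fset n S U \<noteq> {}"
    then obtain u v where uv: "u \<in> S" "v \<in> {..<n} - S - U" "{u, v} \<in> E"
      unfolding Fset_def by auto
    hence "v \<in> nbhd E S" unfolding nbhd_def by auto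
    thus False using uv unfolding U_def by auto
  qed
  ultimately show ?thesis by force
qed

lemma pow_term:
  fixes p b :: real
  assumes p: "0 \<le> p" "p \<le> 1" and i: "(S, U) \<in> Iset b n"
  shows "(1 - p) ^ card (Fset n S U) \<le> exp (- p * card S * (real n - real (card S) - b * card S))"
proof -
  have SU: "S \<subseteq> {..<n}" "U \<subseteq> {..<n}" using i unfolding Iset_def by auto
  have fS: "finite S" using SU(1) finite_subset by blast
  have fU: "finite U" using SU(2) finite_subset by blast
  let ?W = "{..<n} - S - U"
  have "card {..<n} - card (S \<union> U) \<le> card ({..<n} - (S \<union> U))" using fS fU by (intro diff_card_le_card_Diff) auto
  moreover have "card (S \<union> U) \<le> card S + card U" by (rule card_Un_le)
  moreover have "{..<n} - (S \<union> U) = ?W" by auto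
  ultimately have "real (card ?W) \<ge> real n - real (card S) - real (card U)" by auto
  moreover have "real (card U) < b * card S" using i unfolding Iset_def by auto
  ultimately have W: "real (card ?W) \<ge> real n - real (card S) - b * card S" by linarith
  have e1: "1 - p \<le> exp (- p)" using exp_ge_add_one_self[of "-p"] by linarith
  have "(1 - p) ^ card (Fset n S U) \<le> exp (- p) ^ card (Fset n S U)"
    using p e1 by (intro power_mono) auto
  also have "\<dots> = exp (real (card (Fset n S U)) * (- p))" by (simp only: exp_of_nat_mult)
  also have "real (card (Fset n S U)) = card S * real (card ?W)" using card_Fset[OF fS] by simp
  also have "exp (card S * real (card ?W) * (- p)) \<le> exp (- p * card S * (real n - real (card S) - b * card S))"
  proof -
    have "p * card S * (real n - real (card S) - b * card S) \<le> p * card S * real (card ?W)"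
      using W p by (intro mult_left_mono) auto
    thus ?thesis by (simp add: algebra_simps)
  qed
  finally show ?thesis .
qed

lemma sum_pow_card:
  fixes y :: real
  assumes "finite A"
  shows "(\<Sum>X\<in>Pow A. y ^ card X) = (1 + y) ^ card A"
proof -
  have "(\<Prod>x\<in>A. y + 1) = (\<Sum>X\<in>Pow A. (\<Prod>x\<in>X. y) * (\<Prod>x\<in>A-X. 1))"
    by (rule prod_add[OF assms])
  moreover have "(\<Prod>x\<in>A. y + 1) = (1 + y) ^ card A" by (simp only: prod_constant add.commute)
  moreover have "(\<Sum>X\<in>Pow A. (\<Prod>x\<in>X. y) * (\<Prod>x\<in>A-X. 1)) = (\<Sum>X\<in>Pow A. y ^ card X)"
    by (simp only: prod_constant power_one mult_1_right)
  ultimately show ?thesis by simp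
qed

lemma bound_n:
  fixes n :: nat and p k b :: real
  assumes n2: "2 \<le> n" and p: "0 \<le> p" "p \<le> 1" and pn: "k * ln n \<le> n * p" and k2: "2 < k"
    and b: "0 < b" "b < 1"
  fixes Ln e a c :: real
  defines "Ln \<equiv> ln (real n)" and "e \<equiv> (k - 2) / (4 * k)" and "a \<equiv> (k + 2) / 4"
    and "c \<equiv> k * e * (1 - b) / 2"
  shows "gnp_prob n p (\<lambda>E. \<not> b \<le> iota_v n E) \<le>
     (exp (real n * exp (-a * Ln)) - 1) * exp (real n * exp (-a * Ln)) + 2^n * 2^n * exp (- c * real n * Ln)"
proof -
  define y where "y = exp (- a * Ln)"
  define z where "z = exp (- c * real n * Ln)"
  define I where "I = Iset b n"
  define V where "V = {..<n}"
  have y0: "0 \<le> y" unfolding y_def by simp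
  have "gnp_prob n p (\<lambda>E. \<not> b \<le> iota_v n E) \<le> gnp_prob n p (\<lambda>E. \<exists>i\<in>I. E \<inter> Fset n (fst i) (snd i) = {})"
    using p bad_cover[OF n2] unfolding I_def by (intro gnp_mono) auto
  also have "\<dots> \<le> (\<Sum>i\<in>I. gnp_prob n p (\<lambda>E. E \<inter> Fset n (fst i) (snd i) = {}))"
    using p finite_Iset unfolding I_def by (intro gnp_union) auto
  also have "\<dots> = (\<Sum>i\<in>I. (1 - p) ^ card (Fset n (fst i) (snd i)))"
  proof (rule sum.cong)
    fix i assume "i \<in> I"
    hence "fst i \<subseteq> {..<n}" unfolding I_def Iset_def by auto
    thus "gnp_prob n p (\<lambda>E. E \<inter> Fset n (fst i) (snd i) = {}) = (1 - p) ^ card (Fset n (fst i) (snd i))"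
      by (intro gnp_avoid Fset_sub)
  qed simp
  also have "\<dots> \<le> (\<Sum>i\<in>I. y ^ card (fst i) * y ^ card (snd i) + z)"
  proof (rule sum_mono)
    fix i assume i: "i \<in> I"
    obtain S U where SU: "i = (S, U)" by force
    have iS: "(S, U) \<in> Iset b n" using i SU unfolding I_def by simp
    have s1: "1 \<le> card S" and s2: "2 * card S \<le> n" and us0: "real (card U) < b * card S"
      using iS unfolding Iset_def by auto
    have "b * card S \<le> card S" using b by (simp add: mult_left_le_one_le)
    hence us: "card U \<le> card S" using us0 by linarith
    have "(1 - p) ^ card (Fset n S U) \<le> exp (- p * card S * (real n - real (card S) - b * card S))"
      using p iS by (rule pow_term)
    also have "\<dots> \<le> y ^ card S * y ^ card U + z"
      unfolding y_def z_def Ln_def a_def c_def e_def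
      using term_bound[OF n2 p(1) pn k2 b s1 s2 us] by assumption
    finally show "(1 - p) ^ card (Fset n (fst i) (snd i)) \<le> y ^ card (fst i) * y ^ card (snd i) + z"
      using SU by simp
  qed
  also have "\<dots> = (\<Sum>i\<in>I. y ^ card (fst i) * y ^ card (snd i)) + card I * z"
    by (simp only: sum.distrib sum_constant)
  finally have st1: "gnp_prob n p (\<lambda>E. \<not> b \<le> iota_v n E) \<le>
     (\<Sum>i\<in>I. y ^ card (fst i) * y ^ card (snd i)) + card I * z" .
  have st2: "(\<Sum>i\<in>I. y ^ card (fst i) * y ^ card (snd i)) \<le>
      (\<Sum>i\<in>(Pow V - {{}}) \<times> Pow V. y ^ card (fst i) * y ^ card (snd i))"
    using Iset_sub[of b n] y0 unfolding I_def V_def by (intro sum_mono2) auto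
  have st3: "(\<Sum>i\<in>(Pow V - {{}}) \<times> Pow V. y ^ card (fst i) * y ^ card (snd i))
     = (\<Sum>S\<in>Pow V - {{}}. y ^ card S) * (\<Sum>U\<in>Pow V. y ^ card U)"
  proof -
    have "(\<Sum>S\<in>Pow V - {{}}. y ^ card S) * (\<Sum>U\<in>Pow V. y ^ card U)
       = (\<Sum>S\<in>Pow V - {{}}. \<Sum>U\<in>Pow V. y ^ card S * y ^ card U)"
      by (rule sum_product)
    also have "\<dots> = (\<Sum>(S, U)\<in>(Pow V - {{}}) \<times> Pow V. y ^ card S * y ^ card U)"
      by (rule sum.cartesian_product)
    also have "\<dots> = (\<Sum>i\<in>(Pow V - {{}}) \<times> Pow V. y ^ card (fst i) * y ^ card (snd i))"
      by (rule sum.cong) auto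
    finally show ?thesis by simp
  qed
  have st4: "(\<Sum>S\<in>Pow V - {{}}. y ^ card S) = (1 + y) ^ n - 1"
  proof -
    have "(\<Sum>S\<in>Pow V - {{}}. y ^ card S) = (\<Sum>S\<in>Pow V. y ^ card S) - y ^ card ({}::nat set)"
      unfolding V_def by (subst sum_diff1) auto
    thus ?thesis using sum_pow_card[of V y] unfolding V_def by simp
  qed
  have st5: "(\<Sum>U\<in>Pow V. y ^ card U) = (1 + y) ^ n"
    using sum_pow_card[of V y] unfolding V_def by simp
  have st6: "real (card I) * z \<le> 2^n * 2^n * z"
  proof -
    have "card I \<le> card ((Pow V - {{}}) \<times> Pow V)"
      using Iset_sub[of b n] unfolding I_def V_def by (intro card_mono) auto
    also have "\<dots> \<le> card (Pow V \<times> Pow V)" unfolding V_def by (intro card_mono) auto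
    also have "\<dots> = 2^n * 2^n" unfolding V_def by (simp add: card_cartesian_product card_Pow)
    finally have "card I \<le> 2^n * 2^n" .
    hence "real (card I) \<le> real (2^n * 2^n)" by (rule of_nat_mono)
    hence "real (card I) \<le> 2^n * 2^n" by simp
    thus ?thesis unfolding z_def by (intro mult_right_mono) auto
  qed
  have st7: "((1 + y) ^ n - 1) * (1 + y) ^ n \<le> (exp (real n * y) - 1) * exp (real n * y)"
  proof -
    have h1: "(1 + y) ^ n \<le> exp (real n * y)"
    proof -
      have "(1 + y) ^ n \<le> exp y ^ n" using y0 by (intro power_mono) (auto simp: exp_ge_add_one_self add.commute)
      thus ?thesis by (simp add: exp_of_nat_mult)
    qed
    have h2: "1 \<le> (1 + y) ^ n" using y0 by simp
    show ?thesis using h1 h2 y0 by (intro mult_mono) auto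
  qed
  have "gnp_prob n p (\<lambda>E. \<not> b \<le> iota_v n E) \<le> (exp (real n * y) - 1) * exp (real n * y) + 2^n * 2^n * z"
  proof -
    have "(\<Sum>S\<in>Pow V - {{}}. y ^ card S) * (\<Sum>U\<in>Pow V. y ^ card U) = ((1 + y) ^ n - 1) * (1 + y) ^ n"
      using st4 st5 by simp
    thus ?thesis using st1 st2 st3 st6 st7 by linarith
  qed
  thus ?thesis unfolding y_def z_def .
qed

theorem mainTheorem4:
  fixes b t k :: real and p :: "nat \<Rightarrow> real"
  assumes "0 < b" "b < 1"
    and "t > (1 + ln 2) / (1 - b) - ln (1 - b)"
    and "k > 2 * t / (1 - exp (- t))"
    and "\<And>n. 0 \<le> p n \<and> p n \<le> 1"
    and "\<forall>\<^sub>F n in sequentially. real n * p n \<ge> k * ln (real n)"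
  shows "(\<lambda>n. gnp_prob n (p n) (\<lambda>E. iota_v n E \<ge> b)) \<longlonglongrightarrow> 1"
proof -
  have ln2: "0 < ln (2::real)" by simp
  have lnb: "ln (1 - b) < 0" using assms(1,2) by simp
  have m: "(1 + ln 2) * (1 - b) \<le> 1 + ln 2"
    using ln2 assms(1,2) by (intro mult_left_le) auto
  have "1 + ln 2 \<le> (1 + ln 2) / (1 - b)"
    using assms(1,2) m by (simp add: le_divide_eq)
  hence t1: "t > 1" using assms(3) lnb ln2 by linarith
  have et: "0 < exp (- t)" "exp (- t) < 1" using t1 by auto
  have "2 * t \<le> 2 * t / (1 - exp (- t))"
    using et t1 by (simp add: le_divide_eq)
  hence k2: "k > 2" using assms(4) t1 by linarith
  define a where "a = (k + 2) / 4"
  define c where "c = k * ((k - 2) / (4 * k)) * (1 - b) / 2"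
  have a1: "a > 1" unfolding a_def using k2 by simp
  have c0: "c > 0" unfolding c_def using k2 assms(1,2) by simp
  define B where "B n = (exp (real n * exp (-a * ln (real n))) - 1) * exp (real n * exp (-a * ln (real n)))
     + 2^n * 2^n * exp (- c * real n * ln (real n))" for n :: nat
  have limB': "B \<longlonglongrightarrow> 0" unfolding B_def by (rule limB[OF a1 c0])
  define bad where "bad n = gnp_prob n (p n) (\<lambda>E. \<not> b \<le> iota_v n E)" for n
  have ev: "\<forall>\<^sub>F n in sequentially. 0 \<le> bad n \<and> bad n \<le> B n"
    using assms(6) eventually_ge_at_top[of 2]
  proof eventually_elim
    case (elim n)
    have p: "0 \<le> p n" "p n \<le> 1" using assms(5) by auto
    have "bad n \<le> B n"
      unfolding bad_def B_def a_def c_def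
      using bound_n[OF elim(2) p _ k2 assms(1,2)] elim(1) by (simp add: mult.commute)
    moreover have "0 \<le> bad n" unfolding bad_def using p by (rule gnp_nonneg)
    ultimately show ?case by simp
  qed
  have "bad \<longlonglongrightarrow> 0"
  proof (rule tendsto_sandwich[of "\<lambda>_. 0" _ _ B])
    show "\<forall>\<^sub>F n in sequentially. 0 \<le> bad n" using ev by (rule eventually_mono) simp
    show "\<forall>\<^sub>F n in sequentially. bad n \<le> B n" using ev by (rule eventually_mono) simp
  qed (auto simp: limB')
  hence "(\<lambda>n. 1 - bad n) \<longlonglongrightarrow> 1 - 0" by (intro tendsto_intros)
  moreover have "\<And>n. gnp_prob n (p n) (\<lambda>E. iota_v n E \<ge> b) = 1 - bad n"
    unfolding bad_def by (rule gnp_compl)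
  ultimately show ?thesis by simp
qed

end
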